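(* Let $G$ be a bipartite graph with bipartition $A\cup B$ such that every vertex $a\in A$ has degree exactly $2$. Then there exists a subset $X\subseteq B$ with $|X|\le\frac{|A|+|B|}{3}$ such that every vertex of $A$ has a neighbour in $X$. *)

theory Defs
  imports Main
begin

text \<open>A finite simple bipartite graph with parts A and B is represented by its
edge set E, a set of pairs (a,b) with a in A and b in B (each edge ab appears once,
oriented from A to B).\<close>

definition bipartite_graph :: "'v set \<Rightarrow> 'v set \<Rightarrow> ('v \<times> 'v) set \<Rightarrow> bool" where
  "bipartite_graph A B E \<longleftrightarrow> finite A \<and> finite B \<and> A \<inter> B = {} \<and> E \<subseteq> A \<times> B"

definition nbrs :: "('v \<times> 'v) set \<Rightarrow> 'v \<Rightarrow> 'v set" where
  "nbrs E a = {b. (a, b) \<in> E}"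

end

theory Submission
  imports Defs
begin

lemma cover_aux:
  fixes N :: "'a \<Rightarrow> 'b set"
  shows "finite B \<Longrightarrow> finite A \<Longrightarrow> (\<forall>a\<in>A. N a \<subseteq> B \<and> card (N a) = 2) \<Longrightarrow>
    \<exists>X. X \<subseteq> B \<and> 3 * card X \<le> card A + card B \<and> (\<forall>a\<in>A. N a \<inter> X \<noteq> {})"
proof (induction "card B" arbitrary: A B rule: less_induct)
  case less
  show ?case
  proof (cases "\<exists>b\<in>B. card {a\<in>A. b \<in> N a} \<ge> 2")
    case True
    then obtain b where b: "b \<in> B" "card {a\<in>A. b \<in> N a} \<ge> 2" by blast
    define A' where "A' = {a\<in>A. b \<notin> N a}"
    have fA': "finite A'" using less.prems unfolding A'_def by simp
    have sub: "\<forall>a\<in>A'. N a \<subseteq> B - {b} \<and> card (N a) = 2" using less.prems unfolding A'_def by auto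
    have lt: "card (B - {b}) < card B" using b less.prems by (meson card_Diff1_less)
    obtain X' where X': "X' \<subseteq> B - {b}" "3 * card X' \<le> card A' + card (B - {b})"
      "\<forall>a\<in>A'. N a \<inter> X' \<noteq> {}"
      using less.hyps[OF lt _ fA' sub] less.prems by auto
    have split: "A = A' \<union> {a\<in>A. b \<in> N a}" "A' \<inter> {a\<in>A. b \<in> N a} = {}" unfolding A'_def by auto
    have "card A = card A' + card {a\<in>A. b \<in> N a}"
      using less.prems split fA' card_Un_disjoint[of A' "{a\<in>A. b \<in> N a}"] by (metis (no_types, lifting) finite_Un)
    moreover have "card (B - {b}) = card B - 1" using b by simp
    moreover have "card (insert b X') \<le> card X' + 1"
      by (simp add: card_insert_le_m1)
    moreover have "card B \<ge> 1" using lt by simp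
    ultimately have "3 * card (insert b X') \<le> card A + card B" using X' b by linarith
    moreover have "insert b X' \<subseteq> B" using X' b by auto
    moreover have "\<forall>a\<in>A. N a \<inter> insert b X' \<noteq> {}" using X' unfolding A'_def by auto
    ultimately show ?thesis by blast
  next
    case False
    hence le1: "\<forall>b\<in>B. card {a\<in>A. b \<in> N a} \<le> 1" by auto
    have disj: "\<forall>a\<in>A. \<forall>a'\<in>A. a \<noteq> a' \<longrightarrow> N a \<inter> N a' = {}"
    proof (intro ballI impI)
      fix a a' assume a: "a \<in> A" "a' \<in> A" "a \<noteq> a'"
      show "N a \<inter> N a' = {}"
      proof (rule ccontr)
        assume "N a \<inter> N a' \<noteq> {}"
        then obtain b where bb: "b \<in> N a" "b \<in> N a'" by auto
        hence "b \<in> B" using a less.prems by auto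
        have "{a, a'} \<subseteq> {x\<in>A. b \<in> N x}" using a bb by auto
        hence "card {a,a'} \<le> card {x\<in>A. b \<in> N x}" using less.prems by (intro card_mono) auto
        thus False using le1 \<open>b \<in> B\<close> a by fastforce
      qed
    qed
    have fin: "\<forall>a\<in>A. finite (N a)" using less.prems by (metis card.infinite zero_neq_numeral)
    have "card (\<Union>a\<in>A. N a) = (\<Sum>a\<in>A. card (N a))"
      using card_UN_disjoint[OF less.prems(2)] fin disj by blast
    also have "\<dots> = 2 * card A" using less.prems by simp
    finally have c: "card (\<Union>a\<in>A. N a) = 2 * card A" .
    have "card (\<Union>a\<in>A. N a) \<le> card B" using less.prems by (intro card_mono) auto
    hence cB: "2 * card A \<le> card B" using c by simp
    define f where "f a = (SOME b. b \<in> N a)" for a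
    have fa: "\<forall>a\<in>A. f a \<in> N a"
    proof
      fix a assume "a \<in> A"
      hence "N a \<noteq> {}" using less.prems by fastforce
      thus "f a \<in> N a" unfolding f_def by (meson ex_in_conv someI_ex)
    qed
    have "card (f ` A) \<le> card A" by (rule card_image_le[OF less.prems(2)])
    moreover have "f ` A \<subseteq> B" using fa less.prems by auto
    moreover have "\<forall>a\<in>A. N a \<inter> f ` A \<noteq> {}" using fa by auto
    ultimately show ?thesis using cB by (intro exI[of _ "f ` A"]) auto
  qed
qed

theorem lemma3:
  fixes A B :: "'v set" and E :: "('v \<times> 'v) set"
  assumes "bipartite_graph A B E"
    and "\<forall>a\<in>A. card (nbrs E a) = 2"
  shows "\<exists>X. X \<subseteq> B \<and> 3 * card X \<le> card A + card B
              \<and> (\<forall>a\<in>A. nbrs E a \<inter> X \<noteq> {})"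
proof -
  have "\<forall>a\<in>A. nbrs E a \<subseteq> B \<and> card (nbrs E a) = 2"
    using assms unfolding bipartite_graph_def nbrs_def by auto
  thus ?thesis using cover_aux[of B A "nbrs E"] assms unfolding bipartite_graph_def by blast
qed

end
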